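(* Let $a$ and $b$ be coprime odd integers and let $\gamma$ be a positive integer such that $2^\gamma\,\|\,(a+b)$. Then \[G_{(a,b)}(0)\supsetneq G_{(a,b)}(1)\supsetneq G_{(a,b)}(2)\supsetneq\cdots\supsetneq G_{(a,b)}(\gamma)\supsetneq G_{(a,b)}(\gamma+1)=\emptyset.\]
   Context: For coprime nonzero integers $a,b$ and an integer $\beta\geq0$, $G_{(a,b)}(\beta)$ is the set of positive integers $d$ such that $2^\beta d\mid(a^k+b^k)$ for some positive integer $k$. $2^\gamma\,\|\,m$ means $2^\gamma\mid m$ and $2^{\gamma+1}\nmid m$. *)

theory Defs
  imports Main
begin

definition G :: "int \<Rightarrow> int \<Rightarrow> nat \<Rightarrow> nat set" where
  "G a b \<beta> = {d. d > 0 \<and> (\<exists>k::nat. k > 0 \<and> (2::int) ^ \<beta> * int d dvd a ^ k + b ^ k)}"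

end

theory Submission
  imports Defs
begin

lemma odd_sum_parity:
  fixes f :: "nat \<Rightarrow> int"
  assumes "finite A" "\<forall>i\<in>A. odd (f i)"
  shows "even (sum f A) \<longleftrightarrow> even (card A)"
  using assms
proof (induction A rule: finite_induct)
  case empty then show ?case by simp
next
  case (insert x F)
  then show ?case by auto
qed

lemma odd_sq_mod4:
  fixes x :: int assumes "odd x" shows "4 dvd x^2 - 1"
proof -
  obtain t where "x = 2*t+1" using assms oddE by blast
  then have "x^2 - 1 = 4*(t^2+t)" by (simp add: power2_eq_square algebra_simps)
  then show ?thesis by simp
qed

lemma key:
  fixes a b :: int and \<gamma> k :: nat
  assumes "odd a" and "odd b" and "\<gamma> > 0" and "k > 0"
    and "\<not> (2::int) ^ (\<gamma> + 1) dvd a + b"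
  shows "\<not> (2::int) ^ (\<gamma> + 1) dvd a ^ k + b ^ k"
proof (cases "odd k")
  case True
  define S where "S = (\<Sum>i<k. (-b)^(k - Suc i) * a^i)"
  have eq: "a^k - (-b)^k = (a - (-b)) * S"
    unfolding S_def by (rule power_diff_sumr2)
  have "(-b)^k = - (b^k)" using True by simp
  then have eq2: "a^k + b^k = (a+b) * S" using eq by simp
  have "\<forall>i\<in>{..<k}. odd ((-b)^(k - Suc i) * a^i)" using assms by simp
  then have "odd S" unfolding S_def using odd_sum_parity[of "{..<k}"] True by auto
  then have "coprime ((2::int)^(\<gamma>+1)) S" by simp
  then show ?thesis using eq2 assms(5)
    by (simp add: coprime_dvd_mult_left_iff)
next
  case False
  then obtain m where km: "k = 2*m" by blast
  have a: "4 dvd (a^m)^2 - 1" using odd_sq_mod4 assms by simp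
  have b: "4 dvd (b^m)^2 - 1" using odd_sq_mod4 assms by simp
  have e: "a^k + b^k = ((a^m)^2 - 1) + ((b^m)^2 - 1) + 2"
    using km by (simp add: power_mult[symmetric] mult.commute)
  have n4: "\<not> (4::int) dvd a^k + b^k"
  proof
    assume "4 dvd a^k + b^k"
    then have "(4::int) dvd ((a^m)^2 - 1) + ((b^m)^2 - 1) + 2" using e by simp
    then have "(4::int) dvd 2" using a b by (metis dvd_add_right_iff)
    then show False by simp
  qed
  have "(4::int) dvd 2^(\<gamma>+1)"
  proof -
    have "\<gamma>+1 = 2 + (\<gamma>-1)" using assms(3) by simp
    then have "(2::int)^(\<gamma>+1) = 2^2 * 2^(\<gamma>-1)" by (metis power_add)
    then have "(2::int)^(\<gamma>+1) = 4 * 2^(\<gamma>-1)" by simp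
    then show ?thesis by simp
  qed
  then show ?thesis using n4 dvd_trans by blast
qed

theorem corollary2p16:
  fixes a b :: int and \<gamma> :: nat
  assumes "coprime a b" and "odd a" and "odd b" and "\<gamma> > 0"
    and "(2::int) ^ \<gamma> dvd a + b" and "\<not> (2::int) ^ (\<gamma> + 1) dvd a + b"
  shows "(\<forall>i \<le> \<gamma>. G a b (i + 1) \<subset> G a b i) \<and> G a b (\<gamma> + 1) = {}"
proof -
  have empty: "\<And>j d. j \<ge> \<gamma> + 1 \<Longrightarrow> d \<notin> G a b j"
  proof
    fix j d assume j: "j \<ge> \<gamma> + 1" and "d \<in> G a b j"
    then obtain k where k: "k > 0" "(2::int)^j * int d dvd a^k + b^k"
      unfolding G_def by auto
    have "(2::int)^(\<gamma>+1) dvd 2^j" using j by (rule le_imp_power_dvd)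
    then have "(2::int)^(\<gamma>+1) dvd a^k + b^k" using k(2)
      by (meson dvd_mult2 dvd_trans)
    then show False using key[OF assms(2,3,4) k(1) assms(6)] by simp
  qed
  have sub: "\<And>i. G a b (i + 1) \<subseteq> G a b i"
    unfolding G_def using dvd_mult_right by fastforce
  have "\<forall>i \<le> \<gamma>. G a b (i + 1) \<subset> G a b i"
  proof (intro allI impI)
    fix i assume i: "i \<le> \<gamma>"
    have "(2::int)^i * int (2^(\<gamma>-i)) = 2^\<gamma>" using i
      by (simp add: power_add[symmetric])
    then have "2^(\<gamma>-i) \<in> G a b i" unfolding G_def using assms(5)
      by (auto intro!: exI[of _ 1])
    moreover have "(2::nat)^(\<gamma>-i) \<notin> G a b (i+1)"
    proof
      assume "(2::nat)^(\<gamma>-i) \<in> G a b (i+1)"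
      then obtain k where k: "k > 0" "(2::int)^(i+1) * int (2^(\<gamma>-i)) dvd a^k + b^k"
        unfolding G_def by auto
      have "(2::int)^(i+1) * int (2^(\<gamma>-i)) = 2^(\<gamma>+1)" using i
        by (simp add: power_add[symmetric])
      then show False using k key[OF assms(2,3,4) k(1) assms(6)] by (metis mult.assoc)
    qed
    ultimately show "G a b (i + 1) \<subset> G a b i" using sub by blast
  qed
  then show ?thesis using empty by blast
qed

end
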